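(* For every real $\varepsilon$ with $0<\varepsilon<1$, let $\varepsilon'=\varepsilon/(4-2\varepsilon)$ and let $S=\{p,a,b,q\}\subset\mathbb{R}$ with $p=0$, $a=\varepsilon'$, $b=1+\varepsilon'$, $q=1+2\varepsilon'$, equipped with the distance $|xy|$ equal to the absolute difference. Let $G'$ be the path $p,a,b,q$ (a $1$-spanner for $S$), and let $G$ be the graph obtained from $G'$ by the construction in the context with $f=1$ (for any tie-breaking). Then $G$ has edge set $E'\cup\{\{p,b\},\{a,q\}\}$, and for the matching $F=\{\{p,a\},\{b,q\}\}$ we have $\delta_{G\setminus F}(p,q)/\delta_{K_S\setminus F}(p,q)=3-\varepsilon$. In particular the stretch factor $3t$ in Theorem 1 cannot be replaced by any constant smaller than $3t$ in general.
   Context: For a finite metric space $(S,|\cdot|)$, $K_S$ is the complete graph on $S$ with edge weights $|xy|$; $\delta_X(x,y)$ is shortest-path distance in an edge-weighted graph $X$; $X\setminus F$ is $X$ with the edges of $F$ removed. A graph $G'$ on $S$ is a $t$-spanner if $\delta_{G'}(x,y)\le t|xy|$ for all $x,y$. Construction (with $f=1$): for each edge $\{x,y\}$ of $G'=(S,E')$, let $c_{xy}$ be a point of $S\setminus\{x,y\}$ minimizing $|xc|+|cy|$ (ties broken arbitrarily); $G=(S,E)$ with $E=E'\cup\{\{x,c_{xy}\},\{c_{xy},y\}:\{x,y\}\in E'\}$. *)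

theory Defs
  imports Complex_Main
begin

text \<open>Edge-weighted graphs on a vertex type 'a: edges are 2-element sets, the weight of
  edge {x,y} is the metric distance d x y.\<close>

definition complete_graph :: "'a set \<Rightarrow> 'a set set" where
  "complete_graph S = {{x, y} | x y. x \<in> S \<and> y \<in> S \<and> x \<noteq> y}"

definition is_walk :: "'a set set \<Rightarrow> 'a list \<Rightarrow> bool" where
  "is_walk E xs \<longleftrightarrow> xs \<noteq> [] \<and> (\<forall>i. Suc i < length xs \<longrightarrow> {xs ! i, xs ! Suc i} \<in> E)"

definition walk_length :: "('a \<Rightarrow> 'a \<Rightarrow> real) \<Rightarrow> 'a list \<Rightarrow> real" where
  "walk_length d xs = (\<Sum>i < length xs - 1. d (xs ! i) (xs ! Suc i))"

definition sp_dist :: "('a \<Rightarrow> 'a \<Rightarrow> real) \<Rightarrow> 'a set set \<Rightarrow> 'a \<Rightarrow> 'a \<Rightarrow> real" where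
  "sp_dist d E x y = Inf {walk_length d xs | xs. is_walk E xs \<and> hd xs = x \<and> last xs = y}"

text \<open>c is a valid choice of the points c_xy of the construction (f = 1):
  for each edge {x,y} of E', c {x,y} is a point of S - {x,y} minimising |xc| + |cy|.\<close>
definition valid_choice :: "('a \<Rightarrow> 'a \<Rightarrow> real) \<Rightarrow> 'a set \<Rightarrow> 'a set set \<Rightarrow> ('a set \<Rightarrow> 'a) \<Rightarrow> bool" where
  "valid_choice d S E' c \<longleftrightarrow>
     (\<forall>x y. {x, y} \<in> E' \<longrightarrow> c {x, y} \<in> S - {x, y} \<and>
        (\<forall>z \<in> S - {x, y}. d x (c {x, y}) + d (c {x, y}) y \<le> d x z + d z y))"

definition construct_edges :: "'a set set \<Rightarrow> ('a set \<Rightarrow> 'a) \<Rightarrow> 'a set set" where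
  "construct_edges E' c = E' \<union> {e. \<exists>x y. {x, y} \<in> E' \<and> (e = {x, c {x, y}} \<or> e = {c {x, y}, y})}"

end

theory Submission
  imports Defs
begin

lemma walk_bound_aux:
  fixes \<phi> :: "'a \<Rightarrow> real"
  assumes "\<And>i. Suc i < length xs \<Longrightarrow> \<bar>\<phi> (xs!i) - \<phi> (xs ! Suc i)\<bar> \<le> d (xs!i) (xs!Suc i)"
  shows "n < length xs \<Longrightarrow> \<bar>\<phi> (xs!0) - \<phi> (xs!n)\<bar> \<le> (\<Sum>i<n. d (xs!i) (xs!Suc i))"
proof (induction n)
  case 0 then show ?case by simp
next
  case (Suc n)
  have "\<bar>\<phi> (xs!0) - \<phi> (xs!Suc n)\<bar> \<le> \<bar>\<phi> (xs!0) - \<phi> (xs!n)\<bar> + \<bar>\<phi> (xs!n) - \<phi> (xs!Suc n)\<bar>"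
    by linarith
  also have "\<dots> \<le> (\<Sum>i<n. d (xs!i) (xs!Suc i)) + d (xs!n) (xs!Suc n)"
    using Suc assms[of n] by (intro add_mono) auto
  finally show ?case by simp
qed

lemma walk_bound:
  fixes \<phi> :: "'a \<Rightarrow> real"
  assumes "xs \<noteq> []"
    and "\<And>i. Suc i < length xs \<Longrightarrow> \<bar>\<phi> (xs!i) - \<phi> (xs ! Suc i)\<bar> \<le> d (xs!i) (xs!Suc i)"
  shows "\<bar>\<phi> (hd xs) - \<phi> (last xs)\<bar> \<le> walk_length d xs"
proof -
  have "\<bar>\<phi> (xs!0) - \<phi> (xs!(length xs - 1))\<bar> \<le> (\<Sum>i<length xs - 1. d (xs!i) (xs!Suc i))"
    using walk_bound_aux[of xs \<phi> d "length xs - 1"] assms by auto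
  then show ?thesis using assms(1) by (simp add: walk_length_def hd_conv_nth last_conv_nth)
qed

theorem mainTheorem3:
  fixes \<epsilon> :: real and c :: "real set \<Rightarrow> real"
  assumes "0 < \<epsilon>" and "\<epsilon> < 1"
  defines "\<epsilon>' \<equiv> \<epsilon> / (4 - 2 * \<epsilon>)"
  defines "p \<equiv> (0::real)" and "a \<equiv> \<epsilon>'" and "b \<equiv> 1 + \<epsilon>'" and "q \<equiv> 1 + 2 * \<epsilon>'"
  defines "S \<equiv> {p, a, b, q}"
  defines "d \<equiv> (\<lambda>x y :: real. \<bar>x - y\<bar>)"
  defines "E' \<equiv> {{p, a}, {a, b}, {b, q}}"
  defines "F \<equiv> {{p, a}, {b, q}}"
  assumes "valid_choice d S E' c"
  shows "construct_edges E' c = E' \<union> {{p, b}, {a, q}}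
    \<and> sp_dist d (construct_edges E' c - F) p q / sp_dist d (complete_graph S - F) p q = 3 - \<epsilon>"
proof -
  have e0: "0 < \<epsilon>'" using assms(1,2) unfolding \<epsilon>'_def by simp
  have e1: "\<epsilon>' < 1/2" using assms(1,2) unfolding \<epsilon>'_def by (simp add: field_simps)
  have dist: "p \<noteq> a" "p \<noteq> b" "p \<noteq> q" "a \<noteq> b" "a \<noteq> q" "b \<noteq> q"
    using e0 e1 unfolding p_def a_def b_def q_def by auto
  have vc: "\<And>x y. {x, y} \<in> E' \<Longrightarrow> c {x, y} \<in> S - {x, y} \<and>
        (\<forall>z \<in> S - {x, y}. d x (c {x, y}) + d (c {x, y}) y \<le> d x z + d z y)"
    using assms(12) unfolding valid_choice_def by blast
  have c1: "c {p, a} = b"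
    using vc[of p a] e0 e1 unfolding E'_def S_def d_def p_def a_def b_def q_def by auto
  have c3: "c {b, q} = a"
  proof -
    have m: "c {b,q} \<in> S - {b,q}" and le: "d b (c {b, q}) + d (c {b, q}) q \<le> d b a + d a q"
      using vc[of b q] dist unfolding E'_def S_def by auto
    have "c {b,q} = p \<or> c {b,q} = a" using m unfolding S_def by auto
    then show ?thesis using le e0 e1 unfolding d_def p_def a_def b_def q_def by auto
  qed
  have c2: "c {a, b} = p \<or> c {a, b} = q"
    using vc[of a b] e0 e1 unfolding E'_def S_def d_def p_def a_def b_def q_def by auto
  have CE: "construct_edges E' c = E' \<union> {{p, b}, {a, q}}"
  proof
    show "construct_edges E' c \<subseteq> E' \<union> {{p, b}, {a, q}}"
    proof
      fix e assume "e \<in> construct_edges E' c"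
      then consider "e \<in> E'" | x y where "{x,y} \<in> E'" "e = {x, c {x, y}} \<or> e = {c {x, y}, y}"
        unfolding construct_edges_def by blast
      then show "e \<in> E' \<union> {{p, b}, {a, q}}"
      proof cases
        case 1 then show ?thesis by simp
      next
        case 2
        have sw: "{b,a} = {a,b}" "{b,p} = {p,b}" "{a,p} = {p,a}" "{q,b} = {b,q}" "{q,a} = {a,q}"
          "{p,q} = {q,p}"
          by auto
        from 2(1) have "(x=p \<and> y=a) \<or> (x=a \<and> y=p) \<or> (x=a \<and> y=b) \<or> (x=b \<and> y=a) \<or> (x=b \<and> y=q) \<or> (x=q \<and> y=b)"
          unfolding E'_def by (simp add: doubleton_eq_iff)
        then show ?thesis using 2(2) c1 c2 c3 sw unfolding E'_def
          by (elim disjE conjE) (simp_all, (elim disjE; simp)?)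
      qed
    qed
  next
    have "{p,b} \<in> construct_edges E' c"
    proof -
      have "{p,a} \<in> E'" "{p,b} = {p, c {p,a}}" unfolding E'_def using c1 by auto
      then show ?thesis unfolding construct_edges_def by blast
    qed
    moreover have "{a,q} \<in> construct_edges E' c"
    proof -
      have "{b,q} \<in> E'" "{a,q} = {c {b,q}, q}" unfolding E'_def using c3 by auto
      then show ?thesis unfolding construct_edges_def by blast
    qed
    moreover have "E' \<subseteq> construct_edges E' c" unfolding construct_edges_def by blast
    ultimately show "E' \<union> {{p, b}, {a, q}} \<subseteq> construct_edges E' c" by blast
  qed
  have GF: "construct_edges E' c - F = {{a,b},{p,b},{a,q}}"
  proof -
    have ne: "{a,b} \<noteq> {p,a}" "{a,b} \<noteq> {b,q}" "{p,b} \<noteq> {p,a}" "{p,b} \<noteq> {b,q}"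
      "{a,q} \<noteq> {p,a}" "{a,q} \<noteq> {b,q}"
      using dist by (simp_all add: doubleton_eq_iff)
    show ?thesis unfolding CE unfolding E'_def F_def using ne by blast
  qed
  define \<phi> where "\<phi> x = (if x = p then 0 else if x = b then 1 + \<epsilon>' else if x = a then 2 + \<epsilon>' else 3 + 2*\<epsilon>')" for x
  have D1: "sp_dist d (construct_edges E' c - F) p q = 3 + 2*\<epsilon>'"
    unfolding sp_dist_def GF
  proof (rule cInf_eq_minimum)
    let ?w = "[p,b,a,q]"
    have "is_walk {{a,b},{p,b},{a,q}} ?w"
      unfolding is_walk_def
    proof (intro conjI allI impI)
      fix i assume "Suc i < length ?w"
      then have "i = 0 \<or> i = 1 \<or> i = 2" by auto
      moreover have "{b,a} \<in> {{a,b},{p,b},{a,q}}" by blast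
      ultimately show "{?w ! i, ?w ! Suc i} \<in> {{a,b},{p,b},{a,q}}"
        by (elim disjE) simp_all
    qed simp
    moreover have "walk_length d ?w = 3 + 2*\<epsilon>'"
      unfolding walk_length_def d_def p_def a_def b_def q_def using e0
      by (simp add: numeral_eq_Suc lessThan_Suc)
    ultimately show "3 + 2*\<epsilon>' \<in> {walk_length d xs |xs. is_walk {{a, b}, {p, b}, {a, q}} xs \<and> hd xs = p \<and> last xs = q}"
      by force
  next
    fix y assume "y \<in> {walk_length d xs |xs. is_walk {{a, b}, {p, b}, {a, q}} xs \<and> hd xs = p \<and> last xs = q}"
    then obtain xs where xs: "y = walk_length d xs" "is_walk {{a, b}, {p, b}, {a, q}} xs" "hd xs = p" "last xs = q"
      by blast
    have "\<bar>\<phi> (hd xs) - \<phi> (last xs)\<bar> \<le> walk_length d xs"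
    proof (rule walk_bound)
      show "xs \<noteq> []" using xs(2) unfolding is_walk_def by simp
    next
      fix i assume "Suc i < length xs"
      then have "{xs!i, xs!Suc i} \<in> {{a, b}, {p, b}, {a, q}}" using xs(2) unfolding is_walk_def by blast
      then show "\<bar>\<phi> (xs!i) - \<phi> (xs ! Suc i)\<bar> \<le> d (xs!i) (xs!Suc i)"
        using dist e0 e1 unfolding \<phi>_def d_def
        by (auto simp: doubleton_eq_iff p_def a_def b_def q_def)
    qed
    then show "3 + 2*\<epsilon>' \<le> y" using xs dist e0 unfolding \<phi>_def by simp
  qed
  have D2: "sp_dist d (complete_graph S - F) p q = 1 + 2*\<epsilon>'"
    unfolding sp_dist_def
  proof (rule cInf_eq_minimum)
    let ?w = "[p,q]"
    have "is_walk (complete_graph S - F) ?w"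
      unfolding is_walk_def
    proof (intro conjI allI impI)
      fix i assume "Suc i < length ?w"
      then have "i = 0" by auto
      then show "{?w ! i, ?w ! Suc i} \<in> complete_graph S - F"
        using dist unfolding complete_graph_def S_def F_def by (auto simp: doubleton_eq_iff)
    qed simp
    moreover have "walk_length d ?w = 1 + 2*\<epsilon>'"
      unfolding walk_length_def d_def p_def q_def using e0 by simp
    ultimately show "1 + 2*\<epsilon>' \<in> {walk_length d xs |xs. is_walk (complete_graph S - F) xs \<and> hd xs = p \<and> last xs = q}"
      by force
  next
    fix y assume "y \<in> {walk_length d xs |xs. is_walk (complete_graph S - F) xs \<and> hd xs = p \<and> last xs = q}"
    then obtain xs where xs: "y = walk_length d xs" "is_walk (complete_graph S - F) xs" "hd xs = p" "last xs = q"
      by blast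
    have "\<bar>(\<lambda>x. x) (hd xs) - (\<lambda>x. x) (last xs)\<bar> \<le> walk_length d xs"
      by (rule walk_bound) (use xs(2) in \<open>auto simp: is_walk_def d_def\<close>)
    then show "1 + 2*\<epsilon>' \<le> y" using xs e0 unfolding p_def q_def by simp
  qed
  have "(3 + 2*\<epsilon>') / (1 + 2*\<epsilon>') = 3 - \<epsilon>"
    using assms(1,2) unfolding \<epsilon>'_def by (simp add: field_simps)
  then show ?thesis using CE D1 D2 by simp
qed

end
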